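(* Let $\mathscr{H}$ be a complex Hilbert space, let $\mathscr{A}$ be a $C^*$-algebra with $\mathbb{K}(\mathscr{H})\subseteq\mathscr{A}\subseteq\mathbb{B}(\mathscr{H})$, let $\mathscr{E},\mathscr{F}$ be inner product $\mathscr{A}$-modules and let $T:\mathscr{E}\to\mathscr{F}$ be an $\mathscr{A}$-linear mapping. Suppose that for some minimal projection $e$ in $\mathscr{A}$ the restriction $T_e=T|_{\mathscr{E}_e}:\mathscr{E}_e\to\mathscr{F}_e$ satisfies $0<[T_e]\leq\|T_e\|<\infty$. Then (i) $[T]=[T_e]$ and (ii) $\|T\|=\|T_e\|$.
   Context: An inner product $\mathscr{A}$-module is a right $\mathscr{A}$-module with an $\mathscr{A}$-valued inner product $\langle\cdot,\cdot\rangle$ ($\mathbb{C}$-linear and $\mathscr{A}$-linear in the second variable, $\langle x,y\rangle^*=\langle y,x\rangle$, $\langle x,x\rangle\geq0$ with equality iff $x=0$), with norm $\|x\|=\|\langle x,x\rangle\|^{1/2}$. A map is $\mathscr{A}$-linear if it is linear and $T(xa)=(Tx)a$. Minimal projections in $\mathscr{A}$ are the rank-one projections $e=\eta\otimes\eta$, $\|\eta\|=1$, where $(\eta\otimes\zeta)\xi=(\xi,\zeta)\eta$. $\mathscr{E}_e=\{xe:x\in\mathscr{E}\}$ is an inner product space with $(x,y)=\mathrm{tr}\langle x,y\rangle$, whose norm coincides with the module norm; $T$ maps $\mathscr{E}_e$ into $\mathscr{F}_e$ by $\mathscr{A}$-linearity. The minimum modulus is $[T]=\inf\{\|Tx\|:\|x\|=1\}$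 (and similarly $[T_e]$ with $x\in\mathscr{E}_e$). *)

theory Defs
  imports "HOL-Analysis.Analysis"
begin

class cvec = ab_group_add +
  fixes scaleC :: "complex \<Rightarrow> 'a \<Rightarrow> 'a"
  assumes scaleC_add_right: "scaleC c (x + y) = scaleC c x + scaleC c y"
    and scaleC_add_left: "scaleC (c + d) x = scaleC c x + scaleC d x"
    and scaleC_scaleC: "scaleC c (scaleC d x) = scaleC (c * d) x"
    and scaleC_one: "scaleC 1 x = x"

class chilbert = cvec +
  fixes cinner :: "'a \<Rightarrow> 'a \<Rightarrow> complex"
  assumes cinner_add_right: "cinner x (y + z) = cinner x y + cinner x z"
    and cinner_scaleC_right: "cinner x (scaleC c y) = c * cinner x y"
    and cinner_commute: "cinner y x = cnj (cinner x y)"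
    and cinner_nonneg: "0 \<le> Re (cinner x x)"
    and cinner_eq_zero: "cinner x x = 0 \<Longrightarrow> x = 0"
    and cinner_complete:
      "(\<forall>\<epsilon>>0. \<exists>N. \<forall>m\<ge>N. \<forall>n\<ge>N. sqrt (Re (cinner (X m - X n) (X m - X n))) < \<epsilon>)
       \<Longrightarrow> \<exists>L. (\<lambda>n. sqrt (Re (cinner (X n - L) (X n - L)))) \<longlonglongrightarrow> 0"

definition hnorm :: "'h::chilbert \<Rightarrow> real" where
  "hnorm x = sqrt (Re (cinner x x))"

definition bounded_op :: "('h::chilbert \<Rightarrow> 'h) \<Rightarrow> bool" where
  "bounded_op a \<longleftrightarrow> (\<forall>x y. a (x + y) = a x + a y) \<and> (\<forall>c x. a (scaleC c x) = scaleC c (a x))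
     \<and> (\<exists>K. \<forall>x. hnorm (a x) \<le> K * hnorm x)"

definition opnorm :: "('h::chilbert \<Rightarrow> 'h) \<Rightarrow> real" where
  "opnorm a = Sup {hnorm (a x) | x. hnorm x \<le> 1}"

text \<open>Compact operator: the image of the closed unit ball is totally bounded
  (equivalently relatively compact, H being complete).\<close>
definition compact_op :: "('h::chilbert \<Rightarrow> 'h) \<Rightarrow> bool" where
  "compact_op a \<longleftrightarrow> bounded_op a \<and>
     (\<forall>\<epsilon>>0. \<exists>F. finite F \<and> (\<forall>x. hnorm x \<le> 1 \<longrightarrow> (\<exists>y\<in>F. hnorm (a x - y) < \<epsilon>)))"

definition is_adjoint :: "('h::chilbert \<Rightarrow> 'h) \<Rightarrow> ('h \<Rightarrow> 'h) \<Rightarrow> bool" where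
  "is_adjoint a b \<longleftrightarrow> (\<forall>x y. cinner (a x) y = cinner x (b y))"

definition op_add :: "('h::chilbert \<Rightarrow> 'h) \<Rightarrow> ('h \<Rightarrow> 'h) \<Rightarrow> ('h \<Rightarrow> 'h)" where
  "op_add a b = (\<lambda>x. a x + b x)"

definition op_scale :: "complex \<Rightarrow> ('h::chilbert \<Rightarrow> 'h) \<Rightarrow> ('h \<Rightarrow> 'h)" where
  "op_scale c a = (\<lambda>x. scaleC c (a x))"

definition cstar_alg :: "('h::chilbert \<Rightarrow> 'h) set \<Rightarrow> bool" where
  "cstar_alg A \<longleftrightarrow> A \<subseteq> {a. bounded_op a}
     \<and> (\<forall>a\<in>A. \<forall>b\<in>A. op_add a b \<in> A \<and> a \<circ> b \<in> A)
     \<and> (\<forall>c. \<forall>a\<in>A. op_scale c a \<in> A)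
     \<and> (\<forall>a\<in>A. \<exists>b\<in>A. is_adjoint a b)
     \<and> (\<forall>X L. (\<forall>n. X n \<in> A) \<and> bounded_op L \<and> (\<lambda>n. opnorm (\<lambda>x. X n x - L x)) \<longlonglongrightarrow> 0
              \<longrightarrow> L \<in> A)"

definition rank_one :: "'h::chilbert \<Rightarrow> ('h \<Rightarrow> 'h)" where
  "rank_one \<eta> = (\<lambda>\<xi>. scaleC (cinner \<eta> \<xi>) \<eta>)"

text \<open>Minimal projections in A (K(H) \<subseteq> A): the rank-one projections \<eta>\<otimes>\<eta>, \<parallel>\<eta>\<parallel> = 1.\<close>
definition minimal_projection :: "('h::chilbert \<Rightarrow> 'h) set \<Rightarrow> ('h \<Rightarrow> 'h) \<Rightarrow> bool" where
  "minimal_projection A e \<longleftrightarrow> e \<in> A \<and> (\<exists>\<eta>. hnorm \<eta> = 1 \<and> e = rank_one \<eta>)"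

text \<open>act: right action of A on E; ip: the A-valued inner product.\<close>
definition ip_module ::
  "('h::chilbert \<Rightarrow> 'h) set \<Rightarrow> ('e::cvec \<Rightarrow> ('h \<Rightarrow> 'h) \<Rightarrow> 'e) \<Rightarrow> ('e \<Rightarrow> 'e \<Rightarrow> ('h \<Rightarrow> 'h)) \<Rightarrow> bool" where
  "ip_module A act ip \<longleftrightarrow>
     (\<forall>x y a. a \<in> A \<longrightarrow> act (x + y) a = act x a + act y a)
   \<and> (\<forall>x a b. a \<in> A \<longrightarrow> b \<in> A \<longrightarrow> act x (op_add a b) = act x a + act x b)
   \<and> (\<forall>x a b. a \<in> A \<longrightarrow> b \<in> A \<longrightarrow> act (act x a) b = act x (a \<circ> b))
   \<and> (\<forall>x a c. a \<in> A \<longrightarrow> scaleC c (act x a) = act (scaleC c x) a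
                        \<and> scaleC c (act x a) = act x (op_scale c a))
   \<and> (\<forall>x y. ip x y \<in> A)
   \<and> (\<forall>x y z. ip x (y + z) = op_add (ip x y) (ip x z))
   \<and> (\<forall>x y c. ip x (scaleC c y) = op_scale c (ip x y))
   \<and> (\<forall>x y a. a \<in> A \<longrightarrow> ip x (act y a) = ip x y \<circ> a)
   \<and> (\<forall>x y. is_adjoint (ip x y) (ip y x))
   \<and> (\<forall>x \<xi>. 0 \<le> Re (cinner \<xi> (ip x x \<xi>)))
   \<and> (\<forall>x. ip x x = (\<lambda>_. 0) \<longleftrightarrow> x = 0)"

definition mnorm :: "('e \<Rightarrow> 'e \<Rightarrow> ('h::chilbert \<Rightarrow> 'h)) \<Rightarrow> 'e \<Rightarrow> real" where
  "mnorm ip x = sqrt (opnorm (ip x x))"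

definition A_linear ::
  "('h::chilbert \<Rightarrow> 'h) set \<Rightarrow> ('e::cvec \<Rightarrow> ('h \<Rightarrow> 'h) \<Rightarrow> 'e) \<Rightarrow> ('f::cvec \<Rightarrow> ('h \<Rightarrow> 'h) \<Rightarrow> 'f)
     \<Rightarrow> ('e \<Rightarrow> 'f) \<Rightarrow> bool" where
  "A_linear A actE actF T \<longleftrightarrow> (\<forall>x y. T (x + y) = T x + T y) \<and> (\<forall>c x. T (scaleC c x) = scaleC c (T x))
     \<and> (\<forall>x a. a \<in> A \<longrightarrow> T (actE x a) = actF (T x) a)"

definition op_norm_on :: "('e \<Rightarrow> 'e \<Rightarrow> ('h::chilbert \<Rightarrow> 'h)) \<Rightarrow> ('f \<Rightarrow> 'f \<Rightarrow> ('h \<Rightarrow> 'h))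
     \<Rightarrow> ('e \<Rightarrow> 'f) \<Rightarrow> 'e set \<Rightarrow> ereal" where
  "op_norm_on ipE ipF T S = Sup ((\<lambda>x. ereal (mnorm ipF (T x))) ` {x\<in>S. mnorm ipE x = 1})"

definition min_mod_on :: "('e \<Rightarrow> 'e \<Rightarrow> ('h::chilbert \<Rightarrow> 'h)) \<Rightarrow> ('f \<Rightarrow> 'f \<Rightarrow> ('h \<Rightarrow> 'h))
     \<Rightarrow> ('e \<Rightarrow> 'f) \<Rightarrow> 'e set \<Rightarrow> ereal" where
  "min_mod_on ipE ipF T S = Inf ((\<lambda>x. ereal (mnorm ipF (T x))) ` {x\<in>S. mnorm ipE x = 1})"

end

theory Submission imports Defs begin

lemma scaleC_zero_left[simp]: "scaleC 0 (x::'a::cvec) = 0"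
proof -
  have "scaleC 0 x = scaleC 0 x + scaleC 0 x" using scaleC_add_left[of 0 0 x] by simp
  then show ?thesis by simp
qed

lemma scaleC_zero_right[simp]: "scaleC c (0::'a::cvec) = 0"
proof -
  have "scaleC c (0::'a) = scaleC c 0 + scaleC c 0" using scaleC_add_right[of c 0 0] by simp
  then show ?thesis by simp
qed

lemma scaleC_minus_right: "scaleC c (- (x::'a::cvec)) = - scaleC c x"
proof -
  have "scaleC c x + scaleC c (-x) = 0" using scaleC_add_right[of c x "-x"] by simp
  then show ?thesis by (simp add: eq_neg_iff_add_eq_0 add.commute)
qed

lemma scaleC_diff_right: "scaleC c ((x::'a::cvec) - y) = scaleC c x - scaleC c y"
  by (simp only: diff_conv_add_uminus scaleC_add_right scaleC_minus_right)

lemma scaleC_minus_left: "scaleC (- c) (x::'a::cvec) = - scaleC c x"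
proof -
  have "scaleC c x + scaleC (-c) x = 0" using scaleC_add_left[of c "-c" x] by simp
  then show ?thesis by (simp add: eq_neg_iff_add_eq_0 add.commute)
qed

lemma scaleC_diff_left: "scaleC (c - d) (x::'a::cvec) = scaleC c x - scaleC d x"
  by (simp only: diff_conv_add_uminus scaleC_add_left scaleC_minus_left)

lemma cinner_add_left: "cinner ((x::'a::chilbert) + y) z = cinner x z + cinner y z"
  by (metis cinner_commute cinner_add_right complex_cnj_add)

lemma cinner_scaleC_left: "cinner (scaleC c (x::'a::chilbert)) y = cnj c * cinner x y"
  by (metis cinner_commute cinner_scaleC_right complex_cnj_mult complex_cnj_cnj)

lemma cinner_zero_right[simp]: "cinner (x::'a::chilbert) 0 = 0"
  using cinner_scaleC_right[of x 0 x] by simp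

lemma cinner_zero_left[simp]: "cinner 0 (x::'a::chilbert) = 0"
  using cinner_scaleC_left[of 0 x x] by simp

lemma cinner_minus_right: "cinner (x::'a::chilbert) (- y) = - cinner x y"
  using cinner_scaleC_right[of x "-1" y] scaleC_minus_left[of 1 y] by (simp add: scaleC_one)

lemma cinner_minus_left: "cinner (- (x::'a::chilbert)) y = - cinner x y"
  by (metis cinner_commute cinner_minus_right complex_cnj_minus)

lemma cinner_diff_right: "cinner (x::'a::chilbert) (y - z) = cinner x y - cinner x z"
  by (simp only: diff_conv_add_uminus cinner_add_right cinner_minus_right)

lemma cinner_diff_left: "cinner ((x::'a::chilbert) - y) z = cinner x z - cinner y z"
  by (simp only: diff_conv_add_uminus cinner_add_left cinner_minus_left)

lemma cinner_self_real: "cinner (x::'a::chilbert) x = complex_of_real (Re (cinner x x))"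
proof -
  have "cinner x x = cnj (cinner x x)" by (rule cinner_commute)
  then have "Im (cinner x x) = Im (cnj (cinner x x))" by (rule arg_cong)
  then have "Im (cinner x x) = 0" by simp
  then show ?thesis by (simp add: complex_eq_iff)
qed

lemma hnorm_sq: "(hnorm (x::'a::chilbert))^2 = Re (cinner x x)"
  by (simp add: hnorm_def cinner_nonneg)

lemma hnorm_nonneg: "0 \<le> hnorm (x::'a::chilbert)"
  by (simp add: hnorm_def cinner_nonneg)

lemma hnorm_zero[simp]: "hnorm (0::'a::chilbert) = 0"
  by (simp add: hnorm_def)

lemma hnorm_eq_0: "hnorm (x::'a::chilbert) = 0 \<longleftrightarrow> x = 0"
proof
  assume "hnorm x = 0"
  then have "Re (cinner x x) = 0" using hnorm_sq[of x] by simp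
  then have "cinner x x = 0" using cinner_self_real[of x] by (metis of_real_0)
  then show "x = 0" by (rule cinner_eq_zero)
qed simp

lemma hnorm_scaleC: "hnorm (scaleC c (x::'a::chilbert)) = cmod c * hnorm x"
proof -
  have "cinner (scaleC c x) (scaleC c x) = (cnj c * c) * cinner x x"
    by (simp add: cinner_scaleC_left cinner_scaleC_right)
  also have "cnj c * c = complex_of_real ((cmod c)^2)"
    by (metis complex_norm_square mult.commute)
  finally have "Re (cinner (scaleC c x) (scaleC c x)) = (cmod c)^2 * Re (cinner x x)"
    by simp
  then show ?thesis by (simp add: hnorm_def real_sqrt_mult)
qed

lemma re_cinner_le: "Re (cinner (w::'a::chilbert) y) \<le> (Re (cinner w w) + Re (cinner y y)) / 2"
proof -
  have "0 \<le> Re (cinner (w - y) (w - y))" by (rule cinner_nonneg)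
  moreover have "Re (cinner y w) = Re (cinner w y)"
    by (subst cinner_commute) simp
  ultimately show ?thesis by (simp add: cinner_diff_left cinner_diff_right)
qed

lemma cauchy_schwarz: "cmod (cinner (x::'a::chilbert) y) \<le> hnorm x * hnorm y"
proof (cases "x = 0 \<or> y = 0")
  case True then show ?thesis by (auto simp: hnorm_nonneg)
next
  case False
  define c where "c = cinner x y"
  show ?thesis
  proof (cases "c = 0")
    case True then show ?thesis by (simp add: c_def hnorm_nonneg)
  next
    case cnz: False
    have hx: "hnorm x > 0" using False hnorm_eq_0[of x] hnorm_nonneg[of x] by auto
    have hy: "hnorm y > 0" using False hnorm_eq_0[of y] hnorm_nonneg[of y] by auto
    define p where "p = cnj c / complex_of_real (cmod c)"
    have cp: "cmod p = 1" using cnz by (simp add: p_def norm_divide)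
    have "p * c = (c * cnj c) / complex_of_real (cmod c)" by (simp add: p_def mult.commute)
    also have "\<dots> = complex_of_real ((cmod c)^2 / cmod c)"
      by (simp only: complex_norm_square[symmetric] of_real_divide)
    also have "\<dots> = complex_of_real (cmod c)" by (simp add: power2_eq_square)
    finally have pc: "p * c = complex_of_real (cmod c)" .
    define w where "w = scaleC (complex_of_real (hnorm y)) x"
    define z where "z = scaleC (complex_of_real (hnorm x) * p) y"
    have "cinner w z = complex_of_real (hnorm y) * (complex_of_real (hnorm x) * (p * c))"
      by (simp add: w_def z_def cinner_scaleC_left cinner_scaleC_right c_def mult.assoc)
    then have wz: "Re (cinner w z) = hnorm y * hnorm x * cmod c" using pc by simp
    have ww: "Re (cinner w w) = (hnorm y * hnorm x)^2"
      using hnorm_sq[of w] by (simp add: w_def hnorm_scaleC hnorm_nonneg)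
    have zz: "Re (cinner z z) = (hnorm x * hnorm y)^2"
      using hnorm_sq[of z] by (simp add: z_def hnorm_scaleC hnorm_nonneg norm_mult cp)
    have "hnorm y * hnorm x * cmod c \<le> (hnorm x * hnorm y)^2"
      using re_cinner_le[of w z] wz ww zz by (simp add: mult.commute)
    then have "(hnorm x * hnorm y) * cmod c \<le> (hnorm x * hnorm y) * (hnorm x * hnorm y)"
      by (simp add: power2_eq_square mult.commute mult.left_commute)
    then show ?thesis using hx hy by (simp add: c_def)
  qed
qed


lemma Re_ofreal_mult: "Re (complex_of_real r * z) = r * Re z" by simp

lemma bop_add: "bounded_op a \<Longrightarrow> a (x + y) = a x + a y" by (simp add: bounded_op_def)
lemma bop_scaleC: "bounded_op a \<Longrightarrow> a (scaleC c x) = scaleC c (a x)" by (simp add: bounded_op_def)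
lemma bop_zero: "bounded_op a \<Longrightarrow> a 0 = 0"
proof -
  assume "bounded_op a"
  then have "a 0 = a 0 + a 0" using bop_add[of a 0 0] by simp
  then show ?thesis by simp
qed
lemma bop_diff: "bounded_op a \<Longrightarrow> a (x - y) = a x - a y"
proof -
  assume b: "bounded_op a"
  have "a x = a ((x - y) + y)" by simp
  also have "\<dots> = a (x - y) + a y" using bop_add[OF b] by blast
  finally show ?thesis by (simp add: eq_diff_eq)
qed

lemma bop_bdd: "bounded_op a \<Longrightarrow> bdd_above {hnorm (a x) |x. hnorm x \<le> 1}"
proof -
  assume "bounded_op a"
  then obtain K where K: "\<And>x. hnorm (a x) \<le> K * hnorm x" by (auto simp: bounded_op_def)
  have "hnorm (a x) \<le> \<bar>K\<bar>" if "hnorm x \<le> 1" for x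
  proof -
    have "hnorm (a x) \<le> K * hnorm x" by (rule K)
    also have "\<dots> \<le> \<bar>K\<bar> * hnorm x" by (simp add: hnorm_nonneg mult_right_mono)
    also have "\<dots> \<le> \<bar>K\<bar>" using that hnorm_nonneg[of x] by (simp add: mult_left_le)
    finally show ?thesis .
  qed
  then show ?thesis by (intro bdd_aboveI[where M="\<bar>K\<bar>"]) auto
qed

lemma opnorm_upper: "bounded_op a \<Longrightarrow> hnorm x \<le> 1 \<Longrightarrow> hnorm (a x) \<le> opnorm a"
  unfolding opnorm_def by (rule cSup_upper) (auto intro: bop_bdd)

lemma opnorm_nonneg: "bounded_op a \<Longrightarrow> 0 \<le> opnorm a"
  using opnorm_upper[of a 0] by (simp add: bop_zero)

lemma opnorm_le: "(\<And>x. hnorm x \<le> 1 \<Longrightarrow> hnorm (a x) \<le> c) \<Longrightarrow> opnorm a \<le> c"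
  unfolding opnorm_def by (rule cSup_least) (auto intro: exI[of _ 0])

lemma opnorm_bound: "bounded_op a \<Longrightarrow> hnorm (a x) \<le> opnorm a * hnorm x"
proof -
  assume b: "bounded_op a"
  show ?thesis
  proof (cases "x = 0")
    case True then show ?thesis by (simp add: bop_zero[OF b])
  next
    case False
    then have h: "hnorm x > 0" using hnorm_eq_0[of x] hnorm_nonneg[of x] by auto
    define x' where "x' = scaleC (complex_of_real (1 / hnorm x)) x"
    have "hnorm x' = 1" using h by (simp add: x'_def hnorm_scaleC norm_divide)
    then have "hnorm (a x') \<le> opnorm a" by (intro opnorm_upper[OF b]) simp
    moreover have "hnorm (a x') = hnorm (a x) / hnorm x"
      using h by (simp add: x'_def bop_scaleC[OF b] hnorm_scaleC norm_divide)
    ultimately show ?thesis using h by (simp add: divide_le_eq)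
  qed
qed

lemma quad_bound: "bounded_op a \<Longrightarrow> Re (cinner w (a w)) \<le> opnorm a * (hnorm w)^2"
proof -
  assume b: "bounded_op a"
  have "Re (cinner w (a w)) \<le> cmod (cinner w (a w))" by (rule complex_Re_le_cmod)
  also have "\<dots> \<le> hnorm w * hnorm (a w)" by (rule cauchy_schwarz)
  also have "\<dots> \<le> hnorm w * (opnorm a * hnorm w)"
    by (rule mult_left_mono[OF opnorm_bound[OF b] hnorm_nonneg])
  finally show ?thesis by (simp add: power2_eq_square mult.commute mult.left_commute)
qed

lemma herm_real: "is_adjoint a a \<Longrightarrow> cinner \<xi> (a \<xi>) = complex_of_real (Re (cinner \<xi> (a \<xi>)))"
proof -
  assume "is_adjoint a a"
  then have "cinner \<xi> (a \<xi>) = cinner (a \<xi>) \<xi>" by (simp add: is_adjoint_def)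
  also have "\<dots> = cnj (cinner \<xi> (a \<xi>))" by (rule cinner_commute)
  finally have "Im (cinner \<xi> (a \<xi>)) = Im (cnj (cinner \<xi> (a \<xi>)))" by (rule arg_cong)
  then have "Im (cinner \<xi> (a \<xi>)) = 0" by simp
  then show ?thesis by (simp add: complex_eq_iff)
qed

lemma opnorm_compare:
  fixes a b :: "'h::chilbert \<Rightarrow> 'h"
  assumes a: "bounded_op a" and b: "bounded_op b" and adj: "is_adjoint b b"
    and pos: "\<And>\<xi>. 0 \<le> Re (cinner \<xi> (b \<xi>))" and K: "K \<ge> 0"
    and le: "\<And>\<xi>. Re (cinner \<xi> (b \<xi>)) \<le> K * Re (cinner \<xi> (a \<xi>))"
  shows "opnorm b \<le> K * opnorm a"
proof (rule opnorm_le)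
  fix v :: 'h assume v: "hnorm v \<le> 1"
  have Ka: "0 \<le> K * opnorm a" using K opnorm_nonneg[OF a] by simp
  show "hnorm (b v) \<le> K * opnorm a"
  proof (cases "b v = 0")
    case True then show ?thesis using Ka by simp
  next
    case False
    define y where "y = b v"
    define h where "h = hnorm y"
    have h: "h > 0" using False hnorm_eq_0[of y] hnorm_nonneg[of y] by (auto simp: h_def y_def)
    define u where "u = scaleC (complex_of_real (1 / h)) y"
    have hu: "hnorm u = 1" using h by (simp add: u_def hnorm_scaleC h_def norm_divide)
    have "cinner u (b v) = complex_of_real (1 / h) * cinner y y"
      by (simp add: u_def cinner_scaleC_left y_def)
    then have "Re (cinner u (b v)) = (1 / h) * Re (cinner y y)"
      by (simp only: Re_ofreal_mult)
    also have "\<dots> = (1 / h) * h^2" by (simp only: h_def hnorm_sq)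
    also have "\<dots> = h" using h by (simp add: power2_eq_square)
    finally have ub: "Re (cinner u (b v)) = h" .
    have sym: "Re (cinner v (b u)) = Re (cinner u (b v))"
    proof -
      have "cinner v (b u) = cinner (b v) u" using adj by (simp add: is_adjoint_def)
      also have "\<dots> = cnj (cinner u (b v))" by (rule cinner_commute)
      finally show ?thesis by simp
    qed
    have pol: "Re (cinner (u + v) (b (u + v))) - Re (cinner (u - v) (b (u - v)))
               = 4 * Re (cinner u (b v))"
      using sym by (simp add: bop_add[OF b] bop_diff[OF b] cinner_add_left cinner_add_right
          cinner_diff_left cinner_diff_right)
    have symv: "Re (cinner v u) = Re (cinner u v)"
      by (subst cinner_commute) simp
    have e1: "Re (cinner (u + v) (u + v)) = Re (cinner u u) + Re (cinner u v) + Re (cinner v u) + Re (cinner v v)"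
      by (simp add: cinner_add_left cinner_add_right)
    have e2: "Re (cinner (u - v) (u - v)) = Re (cinner u u) - Re (cinner u v) - Re (cinner v u) + Re (cinner v v)"
      by (simp add: cinner_diff_left cinner_diff_right)
    have par: "(hnorm (u + v))^2 + (hnorm (u - v))^2 = 2 * (hnorm u)^2 + 2 * (hnorm v)^2"
      unfolding hnorm_sq using e1 e2 symv by linarith
    have "(hnorm v)^2 \<le> 1" using v hnorm_nonneg[of v] by (simp add: power_le_one)
    moreover have "(hnorm u)^2 = 1" using hu by simp
    moreover have "0 \<le> (hnorm (u - v))^2" by simp
    ultimately have uv: "(hnorm (u + v))^2 \<le> 4" using par by linarith
    have "4 * h = Re (cinner (u + v) (b (u + v))) - Re (cinner (u - v) (b (u - v)))"
      using pol ub by simp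
    also have "\<dots> \<le> Re (cinner (u + v) (b (u + v)))" using pos[of "u - v"] by simp
    also have "\<dots> \<le> K * Re (cinner (u + v) (a (u + v)))" by (rule le)
    also have "\<dots> \<le> K * (opnorm a * (hnorm (u + v))^2)"
      by (rule mult_left_mono[OF quad_bound[OF a] K])
    also have "\<dots> \<le> K * (opnorm a * 4)"
      using uv K opnorm_nonneg[OF a] by (simp add: mult_left_mono)
    finally show ?thesis by (simp add: h_def y_def)
  qed
qed

lemma adj_unique:
  assumes "is_adjoint p q" "is_adjoint p q'" shows "q = q'"
proof
  fix y
  have "cinner x (q y - q' y) = 0" for x
    using assms by (simp add: is_adjoint_def cinner_diff_right)
  then have "cinner (q y - q' y) (q y - q' y) = 0" by blast
  then have "q y - q' y = 0" by (rule cinner_eq_zero)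
  then show "q y = q' y" by simp
qed


lemma ipm_ip_act: "ip_module A act ip \<Longrightarrow> a \<in> A \<Longrightarrow> ip x (act y a) = ip x y \<circ> a"
  by (simp add: ip_module_def)
lemma ipm_adj: "ip_module A act ip \<Longrightarrow> is_adjoint (ip x y) (ip y x)"
  by (simp add: ip_module_def)
lemma ipm_in: "ip_module A act ip \<Longrightarrow> ip x y \<in> A"
  by (simp add: ip_module_def)
lemma ipm_pos: "ip_module A act ip \<Longrightarrow> 0 \<le> Re (cinner \<xi> (ip x x \<xi>))"
  by (simp add: ip_module_def)
lemma ipm_zero: "ip_module A act ip \<Longrightarrow> ip x x = (\<lambda>_. 0) \<longleftrightarrow> x = 0"
  by (simp add: ip_module_def)
lemma ipm_act_act: "ip_module A act ip \<Longrightarrow> a \<in> A \<Longrightarrow> b \<in> A \<Longrightarrow> act (act x a) b = act x (a \<circ> b)"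
  by (simp add: ip_module_def)

definition uop :: "'h::chilbert \<Rightarrow> 'h \<Rightarrow> 'h \<Rightarrow> 'h" where
  "uop \<eta> \<xi> = (\<lambda>\<zeta>. scaleC (cinner \<eta> \<zeta>) \<xi>)"

lemma cinner_self_one: "hnorm (\<eta>::'h::chilbert) = 1 \<Longrightarrow> cinner \<eta> \<eta> = 1"
proof -
  assume "hnorm \<eta> = 1"
  then have "Re (cinner \<eta> \<eta>) = 1" using hnorm_sq[of \<eta>] by simp
  then show ?thesis using cinner_self_real[of \<eta>] by (metis of_real_1)
qed

lemma uop_bounded: "bounded_op (uop \<eta> \<xi>)"
  unfolding bounded_op_def
proof (intro conjI allI)
  fix x y show "uop \<eta> \<xi> (x + y) = uop \<eta> \<xi> x + uop \<eta> \<xi> y"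
    by (simp add: uop_def cinner_add_right scaleC_add_left)
next
  fix c x show "uop \<eta> \<xi> (scaleC c x) = scaleC c (uop \<eta> \<xi> x)"
    by (simp add: uop_def cinner_scaleC_right scaleC_scaleC)
next
  show "\<exists>K. \<forall>x. hnorm (uop \<eta> \<xi> x) \<le> K * hnorm x"
  proof (intro exI allI)
    fix x
    have "hnorm (uop \<eta> \<xi> x) = cmod (cinner \<eta> x) * hnorm \<xi>" by (simp add: uop_def hnorm_scaleC)
    also have "\<dots> \<le> (hnorm \<eta> * hnorm x) * hnorm \<xi>"
      by (rule mult_right_mono[OF cauchy_schwarz hnorm_nonneg])
    finally show "hnorm (uop \<eta> \<xi> x) \<le> (hnorm \<eta> * hnorm \<xi>) * hnorm x"
      by (simp add: mult.commute mult.left_commute)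
  qed
qed

lemma uop_compact:
  fixes \<eta> \<xi> :: "'h::chilbert"
  assumes "hnorm \<eta> \<le> 1" shows "compact_op (uop \<eta> \<xi>)"
  unfolding compact_op_def
proof (intro conjI allI impI)
  show "bounded_op (uop \<eta> \<xi>)" by (rule uop_bounded)
next
  fix \<epsilon> :: real assume ep: "\<epsilon> > 0"
  define \<delta> where "\<delta> = \<epsilon> / (hnorm \<xi> + 1)"
  have hx: "0 \<le> hnorm \<xi>" by (rule hnorm_nonneg)
  have dpos: "\<delta> > 0" using ep hx by (simp add: \<delta>_def)
  have "seq_compact (cball (0::complex) 1)" by (simp add: compact_imp_seq_compact)
  from seq_compact_imp_totally_bounded[OF this] dpos obtain k where
    k: "finite k" "cball (0::complex) 1 \<subseteq> (\<Union>x\<in>k. ball x \<delta>)" by blast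
  show "\<exists>F. finite F \<and> (\<forall>x. hnorm x \<le> 1 \<longrightarrow> (\<exists>y\<in>F. hnorm (uop \<eta> \<xi> x - y) < \<epsilon>))"
  proof (intro exI conjI allI impI)
    show "finite ((\<lambda>c. scaleC c \<xi>) ` k)" using k by simp
  next
    fix x :: 'h assume x: "hnorm x \<le> 1"
    define c where "c = cinner \<eta> x"
    have "cmod c \<le> hnorm \<eta> * hnorm x" unfolding c_def by (rule cauchy_schwarz)
    also have "\<dots> \<le> 1" using assms x hnorm_nonneg[of \<eta>] hnorm_nonneg[of x] by (simp add: mult_le_one)
    finally have "c \<in> cball 0 1" by simp
    with k obtain c0 where c0: "c0 \<in> k" "dist c0 c < \<delta>" by auto
    have "hnorm (uop \<eta> \<xi> x - scaleC c0 \<xi>) = hnorm (scaleC (c - c0) \<xi>)"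
      by (simp add: uop_def c_def scaleC_diff_left)
    also have "\<dots> = cmod (c - c0) * hnorm \<xi>" by (rule hnorm_scaleC)
    also have "\<dots> \<le> \<delta> * hnorm \<xi>"
      using c0(2) hx by (intro mult_right_mono) (auto simp: dist_norm norm_minus_commute)
    also have "\<dots> < \<epsilon>"
    proof -
      have "\<delta> * hnorm \<xi> < \<delta> * (hnorm \<xi> + 1)" using dpos by simp
      also have "\<dots> = \<epsilon>" using hx by (simp add: \<delta>_def)
      finally show ?thesis .
    qed
    finally show "\<exists>y\<in>(\<lambda>c. scaleC c \<xi>) ` k. hnorm (uop \<eta> \<xi> x - y) < \<epsilon>"
      using c0(1) by blast
  qed
qed

lemma uop_e: "hnorm \<eta> = 1 \<Longrightarrow> uop \<eta> \<xi> \<circ> rank_one \<eta> = uop \<eta> \<xi>"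
  by (rule ext) (simp add: uop_def rank_one_def cinner_scaleC_right cinner_self_one)

lemma opnorm_rank:
  fixes \<eta> :: "'h::chilbert"
  assumes \<eta>: "hnorm \<eta> = 1" and q: "0 \<le> q"
  shows "opnorm (\<lambda>\<zeta>. scaleC (complex_of_real q) (scaleC (cinner \<eta> \<zeta>) \<eta>)) = q"
proof (rule antisym)
  have hn: "hnorm (scaleC (complex_of_real q) (scaleC (cinner \<eta> \<zeta>) \<eta>)) = q * cmod (cinner \<eta> \<zeta>)"
    for \<zeta> using \<eta> q by (simp add: hnorm_scaleC)
  show "opnorm (\<lambda>\<zeta>. scaleC (complex_of_real q) (scaleC (cinner \<eta> \<zeta>) \<eta>)) \<le> q"
  proof (rule opnorm_le)
    fix \<zeta> :: 'h assume z: "hnorm \<zeta> \<le> 1"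
    have "cmod (cinner \<eta> \<zeta>) \<le> hnorm \<eta> * hnorm \<zeta>" by (rule cauchy_schwarz)
    also have "\<dots> \<le> 1" using \<eta> z by simp
    finally show "hnorm (scaleC (complex_of_real q) (scaleC (cinner \<eta> \<zeta>) \<eta>)) \<le> q"
      using hn q by (simp add: mult_left_le)
  qed
  show "q \<le> opnorm (\<lambda>\<zeta>. scaleC (complex_of_real q) (scaleC (cinner \<eta> \<zeta>) \<eta>))"
    unfolding opnorm_def
  proof (rule cSup_upper)
    show "q \<in> {hnorm (scaleC (complex_of_real q) (scaleC (cinner \<eta> x) \<eta>)) |x. hnorm x \<le> 1}"
      using hn[of \<eta>] \<eta> by (auto simp: cinner_self_one intro!: exI[of _ \<eta>])
    have "hnorm (scaleC (complex_of_real q) (scaleC (cinner \<eta> x) \<eta>)) \<le> q" if "hnorm x \<le> 1" for x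
    proof -
      have "cmod (cinner \<eta> x) \<le> hnorm \<eta> * hnorm x" by (rule cauchy_schwarz)
      also have "\<dots> \<le> 1" using \<eta> that by simp
      finally show ?thesis using hn q by (simp add: mult_left_le)
    qed
    then show "bdd_above {hnorm (scaleC (complex_of_real q) (scaleC (cinner \<eta> x) \<eta>)) |x. hnorm x \<le> 1}"
      by (intro bdd_aboveI[where M=q]) auto
  qed
qed

lemma ip_act_uop:
  fixes A :: "('h::chilbert \<Rightarrow> 'h) set" and act :: "'e::cvec \<Rightarrow> ('h \<Rightarrow> 'h) \<Rightarrow> 'e"
    and ip :: "'e \<Rightarrow> 'e \<Rightarrow> ('h \<Rightarrow> 'h)"
  assumes M: "ip_module A act ip" and C: "{a. compact_op a} \<subseteq> A" and B: "A \<subseteq> {a. bounded_op a}"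
    and \<eta>: "hnorm \<eta> = 1"
  shows "ip (act x (uop \<eta> \<xi>)) (act x (uop \<eta> \<xi>))
       = (\<lambda>\<zeta>. scaleC (complex_of_real (Re (cinner \<xi> (ip x x \<xi>)))) (scaleC (cinner \<eta> \<zeta>) \<eta>))"
proof -
  let ?u = "uop \<eta> \<xi>" let ?w = "act x ?u" let ?a = "ip x x"
  have uA: "?u \<in> A" using C uop_compact[of \<eta> \<xi>] \<eta> by auto
  have aA: "?a \<in> A" by (rule ipm_in[OF M])
  have ab: "bounded_op ?a" using B aA by auto
  have aadj: "is_adjoint ?a ?a" by (rule ipm_adj[OF M])
  have 1: "ip ?w ?w = ip ?w x \<circ> ?u" by (rule ipm_ip_act[OF M uA])
  have 2: "ip x ?w = ?a \<circ> ?u" by (rule ipm_ip_act[OF M uA])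
  have 3: "is_adjoint (ip x ?w) (ip ?w x)" by (rule ipm_adj[OF M])
  define g where "g = (\<lambda>\<zeta>'. scaleC (cinner \<xi> (?a \<zeta>')) \<eta>)"
  have 4: "is_adjoint (?a \<circ> ?u) g"
    unfolding is_adjoint_def
  proof (intro allI)
    fix \<zeta> \<zeta>'
    have "cinner ((?a \<circ> ?u) \<zeta>) \<zeta>' = cinner (?u \<zeta>) (?a \<zeta>')"
      using aadj by (simp add: is_adjoint_def)
    also have "\<dots> = cnj (cinner \<eta> \<zeta>) * cinner \<xi> (?a \<zeta>')"
      by (simp add: uop_def cinner_scaleC_left)
    also have "\<dots> = cinner \<zeta> (g \<zeta>')"
      using cinner_commute[of \<zeta> \<eta>] by (simp add: g_def cinner_scaleC_right mult.commute)
    finally show "cinner ((?a \<circ> ?u) \<zeta>) \<zeta>' = cinner \<zeta> (g \<zeta>')" .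
  qed
  have 5: "ip ?w x = g" using adj_unique 3 4 2 by metis
  show ?thesis
  proof
    fix \<zeta>
    have "ip ?w ?w \<zeta> = g (?u \<zeta>)" using 1 5 by simp
    also have "\<dots> = scaleC (cinner \<xi> (?a (scaleC (cinner \<eta> \<zeta>) \<xi>))) \<eta>"
      by (simp add: g_def uop_def)
    also have "\<dots> = scaleC (cinner \<eta> \<zeta> * cinner \<xi> (?a \<xi>)) \<eta>"
      by (simp add: bop_scaleC[OF ab] cinner_scaleC_right)
    also have "\<dots> = scaleC (complex_of_real (Re (cinner \<xi> (?a \<xi>))) * cinner \<eta> \<zeta>) \<eta>"
      using herm_real[OF aadj, of \<xi>] by (metis mult.commute)
    also have "\<dots> = scaleC (complex_of_real (Re (cinner \<xi> (?a \<xi>)))) (scaleC (cinner \<eta> \<zeta>) \<eta>)"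
      by (simp add: scaleC_scaleC)
    finally show "ip ?w ?w \<zeta> = scaleC (complex_of_real (Re (cinner \<xi> (?a \<xi>)))) (scaleC (cinner \<eta> \<zeta>) \<eta>)" .
  qed
qed

lemma mnorm_act_uop:
  fixes A :: "('h::chilbert \<Rightarrow> 'h) set" and act :: "'e::cvec \<Rightarrow> ('h \<Rightarrow> 'h) \<Rightarrow> 'e"
    and ip :: "'e \<Rightarrow> 'e \<Rightarrow> ('h \<Rightarrow> 'h)"
  assumes M: "ip_module A act ip" and C: "{a. compact_op a} \<subseteq> A" and B: "A \<subseteq> {a. bounded_op a}"
    and \<eta>: "hnorm \<eta> = 1"
  shows "mnorm ip (act x (uop \<eta> \<xi>)) = sqrt (Re (cinner \<xi> (ip x x \<xi>)))"
  unfolding mnorm_def ip_act_uop[OF M C B \<eta>]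
  by (simp add: opnorm_rank[OF \<eta> ipm_pos[OF M]])

lemma quad_scale:
  assumes "bounded_op a"
  shows "Re (cinner (scaleC (complex_of_real t) \<xi>) (a (scaleC (complex_of_real t) \<xi>)))
         = t^2 * Re (cinner \<xi> (a \<xi>))"
  by (simp add: bop_scaleC[OF assms] cinner_scaleC_left cinner_scaleC_right power2_eq_square)



theorem proposition3p5:
  fixes A :: "('h::chilbert \<Rightarrow> 'h) set"
    and actE :: "'e::cvec \<Rightarrow> ('h \<Rightarrow> 'h) \<Rightarrow> 'e" and ipE :: "'e \<Rightarrow> 'e \<Rightarrow> ('h \<Rightarrow> 'h)"
    and actF :: "'f::cvec \<Rightarrow> ('h \<Rightarrow> 'h) \<Rightarrow> 'f" and ipF :: "'f \<Rightarrow> 'f \<Rightarrow> ('h \<Rightarrow> 'h)"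
    and T :: "'e \<Rightarrow> 'f" and e :: "'h \<Rightarrow> 'h"
  assumes "cstar_alg A"
    and "{a. compact_op a} \<subseteq> A" and "A \<subseteq> {a. bounded_op a}"
    and "ip_module A actE ipE" and "ip_module A actF ipF"
    and "A_linear A actE actF T"
    and "minimal_projection A e"
    and "0 < min_mod_on ipE ipF T (range (\<lambda>x. actE x e))"
    and "min_mod_on ipE ipF T (range (\<lambda>x. actE x e)) \<le> op_norm_on ipE ipF T (range (\<lambda>x. actE x e))"
    and "op_norm_on ipE ipF T (range (\<lambda>x. actE x e)) < \<infinity>"
  shows "min_mod_on ipE ipF T UNIV = min_mod_on ipE ipF T (range (\<lambda>x. actE x e))
       \<and> op_norm_on ipE ipF T UNIV = op_norm_on ipE ipF T (range (\<lambda>x. actE x e))"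
proof -
  note C = assms(2) and B = assms(3) and ME = assms(4) and MF = assms(5) and L = assms(6)
  from assms(7) obtain \<eta> where \<eta>: "hnorm \<eta> = 1" and e: "e = rank_one \<eta>" and eA: "e \<in> A"
    by (auto simp: minimal_projection_def)
  define Se where "Se = range (\<lambda>x. actE x e)"
  have Tadd: "\<And>x y. T (x + y) = T x + T y" using L by (simp add: A_linear_def)
  have Tact: "\<And>x a. a \<in> A \<Longrightarrow> T (actE x a) = actF (T x) a" using L by (simp add: A_linear_def)
  have T0: "T 0 = 0"
  proof -
    have "T 0 = T 0 + T 0" using Tadd[of 0 0] by simp
    then show ?thesis by simp
  qed
  have uA: "\<And>\<xi>. uop \<eta> \<xi> \<in> A" using C uop_compact[of \<eta>] \<eta> by auto
  have inSe: "actE x (uop \<eta> \<xi>) \<in> Se" for x \<xi>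
  proof -
    have "actE (actE x (uop \<eta> \<xi>)) e = actE x (uop \<eta> \<xi>)"
      using ipm_act_act[OF ME uA eA] uop_e[OF \<eta>] e by simp
    then show ?thesis unfolding Se_def by (metis rangeI)
  qed
  define mm where "mm = min_mod_on ipE ipF T Se"
  define MM where "MM = op_norm_on ipE ipF T Se"
  have mm0: "0 < mm" and mmMM: "mm \<le> MM" and MMi: "MM < \<infinity>"
    using assms(8,9,10) by (simp_all add: mm_def MM_def Se_def)
  obtain m0 where m0: "mm = ereal m0" using mm0 mmMM MMi by (cases mm) auto
  obtain M0 where M0: "MM = ereal M0" using mm0 mmMM MMi by (cases MM) auto
  have m0pos: "0 < m0" using mm0 m0 by simp
  have m0M0: "m0 \<le> M0" using mmMM m0 M0 by simp
  have low: "m0 \<le> mnorm ipF (T w)" if "w \<in> Se" "mnorm ipE w = 1" for w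
  proof -
    have "mm \<le> ereal (mnorm ipF (T w))" unfolding mm_def min_mod_on_def
      by (rule INF_lower) (use that in simp)
    then show ?thesis using m0 by simp
  qed
  have up: "mnorm ipF (T w) \<le> M0" if "w \<in> Se" "mnorm ipE w = 1" for w
  proof -
    have "ereal (mnorm ipF (T w)) \<le> MM" unfolding MM_def op_norm_on_def
      by (rule SUP_upper) (use that in simp)
    then show ?thesis using M0 by simp
  qed
  have key: "m0^2 * Re (cinner \<xi> (ipE x x \<xi>)) \<le> Re (cinner \<xi> (ipF (T x) (T x) \<xi>))
     \<and> Re (cinner \<xi> (ipF (T x) (T x) \<xi>)) \<le> M0^2 * Re (cinner \<xi> (ipE x x \<xi>))" for x \<xi>
  proof -
    define q where "q = Re (cinner \<xi> (ipE x x \<xi>))"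
    define r where "r = Re (cinner \<xi> (ipF (T x) (T x) \<xi>))"
    have q0: "0 \<le> q" unfolding q_def by (rule ipm_pos[OF ME])
    have r0: "0 \<le> r" unfolding r_def by (rule ipm_pos[OF MF])
    have aB: "bounded_op (ipE x x)" using ipm_in[OF ME] B by auto
    have bB: "bounded_op (ipF (T x) (T x))" using ipm_in[OF MF] B by auto
    show ?thesis
    proof (cases "q = 0")
      case False
      then have qp: "q > 0" using q0 by simp
      define t where "t = 1 / sqrt q"
      define \<xi>' where "\<xi>' = scaleC (complex_of_real t) \<xi>"
      have t2: "t^2 = 1 / q" using qp by (simp add: t_def power_divide)
      have q': "Re (cinner \<xi>' (ipE x x \<xi>')) = 1"
        unfolding \<xi>'_def quad_scale[OF aB] using t2 qp by (simp add: q_def)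
      have r': "Re (cinner \<xi>' (ipF (T x) (T x) \<xi>')) = r / q"
        unfolding \<xi>'_def quad_scale[OF bB] using t2 by (simp add: r_def)
      define w where "w = actE x (uop \<eta> \<xi>')"
      have wS: "w \<in> Se" unfolding w_def by (rule inSe)
      have wn: "mnorm ipE w = 1" unfolding w_def mnorm_act_uop[OF ME C B \<eta>] q' by simp
      have Tw: "T w = actF (T x) (uop \<eta> \<xi>')" unfolding w_def by (rule Tact[OF uA])
      have Twn: "mnorm ipF (T w) = sqrt (r / q)" unfolding Tw mnorm_act_uop[OF MF C B \<eta>] r' ..
      have s0: "0 \<le> r / q" using r0 q0 by simp
      have l1: "m0 \<le> sqrt (r / q)" using low[OF wS wn] Twn by simp
      have l2: "sqrt (r / q) \<le> M0" using up[OF wS wn] Twn by simp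
      have "m0^2 \<le> (sqrt (r / q))^2" using l1 m0pos by (intro power_mono) auto
      then have "m0^2 \<le> r / q" using s0 by simp
      then have A1: "m0^2 * q \<le> r" using qp by (simp add: pos_le_divide_eq)
      have "(sqrt (r / q))^2 \<le> M0^2" using l2 s0 by (intro power_mono) auto
      then have "r / q \<le> M0^2" using s0 by simp
      then have A2: "r \<le> M0^2 * q" using qp by (simp add: pos_divide_le_eq)
      show ?thesis using A1 A2 by (simp add: q_def r_def)
    next
      case True
      define w where "w = actE x (uop \<eta> \<xi>)"
      have "ipE w w = (\<lambda>_. 0)"
        unfolding w_def ip_act_uop[OF ME C B \<eta>] using True by (simp add: q_def)
      then have w0: "w = 0" using ipm_zero[OF ME] by blast
      have "T w = actF (T x) (uop \<eta> \<xi>)" unfolding w_def by (rule Tact[OF uA])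
      then have "ipF (actF (T x) (uop \<eta> \<xi>)) (actF (T x) (uop \<eta> \<xi>)) = (\<lambda>_. 0)"
        using w0 T0 ipm_zero[OF MF, of 0] by simp
      then have "(\<lambda>\<zeta>. scaleC (complex_of_real r) (scaleC (cinner \<eta> \<zeta>) \<eta>)) = (\<lambda>_. 0)"
        unfolding ip_act_uop[OF MF C B \<eta>] r_def .
      then have "scaleC (complex_of_real r) (scaleC (cinner \<eta> \<eta>) \<eta>) = 0" by metis
      then have "hnorm (scaleC (complex_of_real r) (scaleC (cinner \<eta> \<eta>) \<eta>)) = 0" by simp
      then have "r = 0" using \<eta> by (simp add: hnorm_scaleC cinner_self_one)
      then show ?thesis using True by (simp add: q_def r_def)
    qed
  qed
  have bounds: "m0 * mnorm ipE x \<le> mnorm ipF (T x) \<and> mnorm ipF (T x) \<le> M0 * mnorm ipE x" for x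
  proof -
    have aB: "bounded_op (ipE x x)" using ipm_in[OF ME] B by auto
    have bB: "bounded_op (ipF (T x) (T x))" using ipm_in[OF MF] B by auto
    have o1: "opnorm (ipF (T x) (T x)) \<le> M0^2 * opnorm (ipE x x)"
      by (rule opnorm_compare[OF aB bB ipm_adj[OF MF] ipm_pos[OF MF]]) (use key in auto)
    have "\<And>\<xi>. Re (cinner \<xi> (ipE x x \<xi>)) \<le> (1 / m0^2) * Re (cinner \<xi> (ipF (T x) (T x) \<xi>))"
      using key m0pos by (simp add: field_simps)
    then have o2: "opnorm (ipE x x) \<le> (1 / m0^2) * opnorm (ipF (T x) (T x))"
      by (intro opnorm_compare[OF bB aB ipm_adj[OF ME] ipm_pos[OF ME]]) auto
    have na: "0 \<le> opnorm (ipE x x)" by (rule opnorm_nonneg[OF aB])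
    have "mnorm ipF (T x) \<le> sqrt (M0^2 * opnorm (ipE x x))"
      unfolding mnorm_def using o1 by simp
    also have "\<dots> = M0 * mnorm ipE x"
      using m0pos m0M0 by (simp add: mnorm_def real_sqrt_mult)
    finally have u: "mnorm ipF (T x) \<le> M0 * mnorm ipE x" .
    have "m0^2 * opnorm (ipE x x) \<le> opnorm (ipF (T x) (T x))"
      using o2 m0pos by (simp add: field_simps)
    then have "sqrt (m0^2 * opnorm (ipE x x)) \<le> mnorm ipF (T x)"
      unfolding mnorm_def by simp
    moreover have "sqrt (m0^2 * opnorm (ipE x x)) = m0 * mnorm ipE x"
      using m0pos by (simp add: mnorm_def real_sqrt_mult)
    ultimately show ?thesis using u by simp
  qed
  have I: "min_mod_on ipE ipF T UNIV = mm"
  proof (rule antisym)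
    show "min_mod_on ipE ipF T UNIV \<le> mm" unfolding min_mod_on_def mm_def
      by (rule INF_superset_mono) auto
    show "mm \<le> min_mod_on ipE ipF T UNIV" unfolding min_mod_on_def m0
    proof (rule INF_greatest)
      fix x assume "x \<in> {x \<in> UNIV. mnorm ipE x = 1}"
      then show "ereal m0 \<le> ereal (mnorm ipF (T x))" using bounds[of x] by simp
    qed
  qed
  have S: "op_norm_on ipE ipF T UNIV = MM"
  proof (rule antisym)
    show "MM \<le> op_norm_on ipE ipF T UNIV" unfolding op_norm_on_def MM_def
      by (rule SUP_subset_mono) auto
    show "op_norm_on ipE ipF T UNIV \<le> MM" unfolding op_norm_on_def M0
    proof (rule SUP_least)
      fix x assume "x \<in> {x \<in> UNIV. mnorm ipE x = 1}"
      then show "ereal (mnorm ipF (T x)) \<le> ereal M0" using bounds[of x] by simp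
    qed
  qed
  show ?thesis using I S by (simp add: mm_def MM_def Se_def)
qed

end
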